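(* For any finite symmetric two-player game $(X,\pi)$ with relative payoff function $\Delta$, imitation is subject to a money pump if and only if there exists an imitation cycle.
   Context: A symmetric two-player game $(X,\pi)$ has common action set $X$ and bounded payoff $\pi:X\times X\to\mathbb{R}$ ($\pi(x,y)$ = payoff of the player choosing $x$ against $y$). Relative payoff: $\Delta(x,y)=\pi(x,y)-\pi(y,x)$. Imitate-the-best: given initial $y_0\in X$ and any opponent sequence $(x_t)_{t\ge0}$, $y_t=x_{t-1}$ if $\Delta(x_{t-1},y_{t-1})>0$ and $y_t=y_{t-1}$ otherwise. Imitation is not subject to a money pump if there is $M\in\mathbb{R}_+$ such that for every $y_0\in X$ and every sequence $(x_t)$, $\limsup_{T\to\infty}\sum_{t=0}^T\Delta(x_t,y_t)\le M$; otherwise it is subject to a money pump. A cycle is a finite sequence of profiles $(x_0,y_0),\dots,(x_n,y_n)$ in $X\times X$, not all equal, with $(x_0,y_0)=(x_n,y_n)$. It is an imitation cycle if for all consecutive profiles $(x_t,y_t),(x_{t+1},y_{t+1})$ on it, $\Delta(x_t,y_t)>0$ and $y_{t+1}=x_t$. *)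

theory Defs
  imports "HOL-Analysis.Analysis"
begin

definition rel_payoff :: "('a \<Rightarrow> 'a \<Rightarrow> real) \<Rightarrow> 'a \<Rightarrow> 'a \<Rightarrow> real" where
  "rel_payoff \<pi> x y = \<pi> x y - \<pi> y x"

fun imitate :: "('a \<Rightarrow> 'a \<Rightarrow> real) \<Rightarrow> 'a \<Rightarrow> (nat \<Rightarrow> 'a) \<Rightarrow> nat \<Rightarrow> 'a" where
  "imitate \<pi> y0 xs 0 = y0"
| "imitate \<pi> y0 xs (Suc t) =
     (if rel_payoff \<pi> (xs t) (imitate \<pi> y0 xs t) > 0 then xs t else imitate \<pi> y0 xs t)"

definition no_money_pump :: "('a \<Rightarrow> 'a \<Rightarrow> real) \<Rightarrow> bool" where
  "no_money_pump \<pi> \<longleftrightarrow> (\<exists>M::real. M \<ge> 0 \<and> (\<forall>y0 xs.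
      limsup (\<lambda>T. ereal (\<Sum>t\<le>T. rel_payoff \<pi> (xs t) (imitate \<pi> y0 xs t))) \<le> ereal M))"

definition money_pump :: "('a \<Rightarrow> 'a \<Rightarrow> real) \<Rightarrow> bool" where
  "money_pump \<pi> \<longleftrightarrow> \<not> no_money_pump \<pi>"

definition is_cycle :: "('a \<times> 'a) list \<Rightarrow> bool" where
  "is_cycle p \<longleftrightarrow> length p \<ge> 2 \<and> hd p = last p \<and> (\<exists>q\<in>set p. q \<noteq> hd p)"

definition imitation_cycle :: "('a \<Rightarrow> 'a \<Rightarrow> real) \<Rightarrow> ('a \<times> 'a) list \<Rightarrow> bool" where
  "imitation_cycle \<pi> p \<longleftrightarrow> is_cycle p \<and>
     (\<forall>t. Suc t < length p \<longrightarrow>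
        rel_payoff \<pi> (fst (p ! t)) (snd (p ! t)) > 0 \<and> snd (p ! Suc t) = fst (p ! t))"

end

theory Submission
  imports Defs
begin

definition Rimi :: "('a \<Rightarrow> 'a \<Rightarrow> real) \<Rightarrow> 'a \<times> 'a \<Rightarrow> 'a \<times> 'a \<Rightarrow> bool" where
  "Rimi \<pi> a b \<longleftrightarrow> rel_payoff \<pi> (fst a) (snd a) > 0 \<and> rel_payoff \<pi> (fst b) (snd b) > 0 \<and> snd b = fst a"

lemma path_list:
  assumes "(Rimi \<pi>)\<^sup>+\<^sup>+ a b"
  shows "\<exists>p. length p \<ge> 2 \<and> hd p = a \<and> last p = b \<and> (\<forall>i. Suc i < length p \<longrightarrow> Rimi \<pi> (p!i) (p!Suc i))"
  using assms
proof (induction rule: tranclp_induct)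
  case (base y)
  then show ?case by (intro exI[of _ "[a,y]"]) (auto simp: less_Suc_eq)
next
  case (step y z)
  then obtain p where p: "length p \<ge> 2" "hd p = a" "last p = y"
    "\<forall>i. Suc i < length p \<longrightarrow> Rimi \<pi> (p!i) (p!Suc i)" by blast
  have "\<forall>i. Suc i < length (p@[z]) \<longrightarrow> Rimi \<pi> ((p@[z])!i) ((p@[z])!Suc i)"
  proof (intro allI impI)
    fix i assume i: "Suc i < length (p@[z])"
    show "Rimi \<pi> ((p@[z])!i) ((p@[z])!Suc i)"
    proof (cases "Suc i < length p")
      case True then show ?thesis using p(4) by (simp add: nth_append)
    next
      case False
      then have "Suc i = length p" using i by simp
      moreover have "p ! i = last p" using \<open>Suc i = length p\<close> p(1)
        by (metis diff_Suc_1 last_conv_nth list.size(3) not_numeral_le_zero)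
      ultimately show ?thesis using p(3) step(2) by (simp add: nth_append)
    qed
  qed
  moreover have "p \<noteq> []" using p(1) by auto
  ultimately show ?case using p by (intro exI[of _ "p@[z]"]) auto
qed

lemma cycle_from_trancl:
  assumes "(Rimi \<pi>)\<^sup>+\<^sup>+ a a"
  shows "\<exists>p. imitation_cycle \<pi> p"
proof -
  obtain p where p: "length p \<ge> 2" "hd p = a" "last p = a"
    "\<forall>i. Suc i < length p \<longrightarrow> Rimi \<pi> (p!i) (p!Suc i)" using path_list[OF assms] by blast
  have ne: "\<exists>q\<in>set p. q \<noteq> hd p"
  proof (rule ccontr)
    assume "\<not> ?thesis"
    then have all: "\<forall>q\<in>set p. q = hd p" by blast
    have "Rimi \<pi> (p!0) (p!1)" using p(1,4) by auto
    moreover have "p \<noteq> []" using p(1) by auto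
    moreover have "p!0 = hd p" using \<open>p \<noteq> []\<close> by (simp add: hd_conv_nth)
    moreover have "p!1 = hd p" using all p(1) by (metis Suc_1 Suc_le_lessD nth_mem)
    ultimately have "Rimi \<pi> (hd p) (hd p)" by simp
    then show False by (auto simp: Rimi_def rel_payoff_def)
  qed
  have "imitation_cycle \<pi> p"
    unfolding imitation_cycle_def is_cycle_def using p ne by (auto simp: Rimi_def)
  then show ?thesis by blast
qed

lemma const_lemma:
  assumes "rel_payoff \<pi> (xs t) (imitate \<pi> y0 xs t) > 0" "t < u"
    "\<forall>v. t < v \<and> v < u \<longrightarrow> \<not> rel_payoff \<pi> (xs v) (imitate \<pi> y0 xs v) > 0"
  shows "imitate \<pi> y0 xs u = xs t"
  using assms
proof (induction u)
  case 0 then show ?case by simp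
next
  case (Suc w)
  show ?case
  proof (cases "w = t")
    case True then show ?thesis using Suc.prems by simp
  next
    case False
    then have "t < w" using Suc.prems by simp
    then have "imitate \<pi> y0 xs w = xs t" using Suc by auto
    moreover have "\<not> rel_payoff \<pi> (xs w) (imitate \<pi> y0 xs w) > 0" using Suc.prems \<open>t < w\<close> by auto
    ultimately show ?thesis by simp
  qed
qed

lemma chain_lemma:
  fixes \<pi> :: "'a \<Rightarrow> 'a \<Rightarrow> real" and xs :: "nat \<Rightarrow> 'a" and y0 :: 'a
  defines "P \<equiv> {t. rel_payoff \<pi> (xs t) (imitate \<pi> y0 xs t) > 0}"
  defines "prof \<equiv> \<lambda>t. (xs t, imitate \<pi> y0 xs t)"
  assumes "t \<in> P"
  shows "s \<in> P \<Longrightarrow> t < s \<Longrightarrow> (Rimi \<pi>)\<^sup>+\<^sup>+ (prof t) (prof s)"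
proof (induction s rule: less_induct)
  case (less s)
  define S where "S = {v\<in>P. t \<le> v \<and> v < s}"
  have fin: "finite S" unfolding S_def by auto
  have tS: "t \<in> S" using assms(3) less.prems unfolding S_def by auto
  define u where "u = Max S"
  have uS: "u \<in> S" using fin tS unfolding u_def using Max_in by blast
  have umax: "\<And>v. v \<in> S \<Longrightarrow> v \<le> u" using fin unfolding u_def by auto
  have nobetween: "\<forall>v. u < v \<and> v < s \<longrightarrow> \<not> rel_payoff \<pi> (xs v) (imitate \<pi> y0 xs v) > 0"
  proof (intro allI impI notI)
    fix v assume "u < v \<and> v < s" "rel_payoff \<pi> (xs v) (imitate \<pi> y0 xs v) > 0"
    then have "v \<in> S" using uS unfolding S_def P_def by auto
    then show False using umax \<open>u < v \<and> v < s\<close> by fastforce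
  qed
  have "imitate \<pi> y0 xs s = xs u"
    using const_lemma[of \<pi> xs u y0 s] uS nobetween unfolding S_def P_def by auto
  then have R: "Rimi \<pi> (prof u) (prof s)"
    using uS less.prems unfolding Rimi_def prof_def S_def P_def by auto
  show ?case
  proof (cases "u = t")
    case True then show ?thesis using R by auto
  next
    case False
    then have "t < u" "u < s" "u \<in> P" using uS unfolding S_def by auto
    then have "(Rimi \<pi>)\<^sup>+\<^sup>+ (prof t) (prof u)" using less.IH by blast
    then show ?thesis using R by (meson tranclp.trancl_into_trancl)
  qed
qed


lemma cycle_pump:
  fixes \<pi> :: "'a \<Rightarrow> 'a \<Rightarrow> real"
  assumes cyc: "imitation_cycle \<pi> p"
  shows "money_pump \<pi>"
proof -
  define n where "n = length p - 1"
  have lp: "length p \<ge> 2" "hd p = last p" and ic: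
    "\<And>t. Suc t < length p \<Longrightarrow> rel_payoff \<pi> (fst (p ! t)) (snd (p ! t)) > 0 \<and> snd (p ! Suc t) = fst (p ! t)"
    using cyc unfolding imitation_cycle_def is_cycle_def by auto
  have n1: "n \<ge> 1" and ln: "length p = Suc n" using lp unfolding n_def by auto
  have p0n: "p ! 0 = p ! n"
    using lp ln by (metis hd_conv_nth last_conv_nth list.size(3) nat.distinct(1) diff_Suc_1)
  define xs where "xs = (\<lambda>t. fst (p ! (t mod n)))"
  define y0 where "y0 = snd (p ! 0)"
  have imi: "imitate \<pi> y0 xs t = snd (p ! (t mod n))" for t
  proof (induction t)
    case 0 then show ?case by (simp add: y0_def)
  next
    case (Suc t)
    define i where "i = t mod n"
    have i: "i < n" using n1 unfolding i_def by auto
    then have pos: "rel_payoff \<pi> (fst (p ! i)) (snd (p ! i)) > 0" and eq: "snd (p ! Suc i) = fst (p ! i)"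
      using ic[of i] ln by auto
    have "imitate \<pi> y0 xs (Suc t) = fst (p ! i)"
      using Suc pos unfolding xs_def i_def by simp
    also have "\<dots> = snd (p ! (Suc t mod n))"
    proof (cases "Suc i = n")
      case True
      then have "Suc t mod n = 0" unfolding i_def by (simp add: mod_Suc)
      then show ?thesis using eq True p0n by simp
    next
      case False
      then have "Suc t mod n = Suc i" unfolding i_def by (simp add: mod_Suc)
      then show ?thesis using eq by simp
    qed
    finally show ?case .
  qed
  define D where "D = (\<lambda>i. rel_payoff \<pi> (fst (p ! i)) (snd (p ! i)))"
  define c where "c = Min (D ` {..<n})"
  have c_pos: "c > 0" unfolding c_def using n1 ic ln D_def
    by (subst Min_gr_iff) (auto simp: lessThan_empty_iff)
  have term_ge: "rel_payoff \<pi> (xs t) (imitate \<pi> y0 xs t) \<ge> c" for t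
  proof -
    have "t mod n < n" using n1 by auto
    then have "c \<le> D (t mod n)" unfolding c_def by auto
    then show ?thesis unfolding D_def imi by (simp add: xs_def)
  qed
  have sum_ge: "(\<Sum>t\<le>T. rel_payoff \<pi> (xs t) (imitate \<pi> y0 xs t)) \<ge> c * (real T + 1)" for T
  proof -
    have "(\<Sum>t\<le>T. rel_payoff \<pi> (xs t) (imitate \<pi> y0 xs t)) \<ge> (\<Sum>t\<le>T. c)"
      by (rule sum_mono) (rule term_ge)
    then show ?thesis by (simp add: algebra_simps)
  qed
  show ?thesis unfolding money_pump_def no_money_pump_def
  proof
    assume "\<exists>M. 0 \<le> M \<and> (\<forall>y0 xs. limsup (\<lambda>T. ereal (\<Sum>t\<le>T. rel_payoff \<pi> (xs t) (imitate \<pi> y0 xs t))) \<le> ereal M)"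
    then obtain M where M: "limsup (\<lambda>T. ereal (\<Sum>t\<le>T. rel_payoff \<pi> (xs t) (imitate \<pi> y0 xs t))) \<le> ereal M"
      by blast
    then have "limsup (\<lambda>T. ereal (\<Sum>t\<le>T. rel_payoff \<pi> (xs t) (imitate \<pi> y0 xs t))) < ereal (M+1)"
    proof -
      have "ereal M < ereal (M+1)" by simp
      then show ?thesis using M by (rule order_le_less_trans[rotated])
    qed
    from Limsup_lessD[OF this] obtain N where
      N: "\<And>T. T \<ge> N \<Longrightarrow> (\<Sum>t\<le>T. rel_payoff \<pi> (xs t) (imitate \<pi> y0 xs t)) < M + 1"
      unfolding eventually_sequentially by auto
    obtain K :: nat where K: "(M+1)/c < real K" using reals_Archimedean2 by blast
    define T where "T = max N K"
    have "M + 1 < c * real K" using K c_pos by (simp add: field_simps)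
    also have "\<dots> \<le> c * (real T + 1)" using c_pos unfolding T_def by (simp add: mult_left_mono)
    also have "\<dots> \<le> (\<Sum>t\<le>T. rel_payoff \<pi> (xs t) (imitate \<pi> y0 xs t))" by (rule sum_ge)
    finally show False using N[of T] unfolding T_def by auto
  qed
qed

lemma nocycle_nopump:
  fixes \<pi> :: "'a::finite \<Rightarrow> 'a \<Rightarrow> real"
  assumes nc: "\<not> (\<exists>p. imitation_cycle \<pi> p)"
  shows "no_money_pump \<pi>"
proof -
  define B where "B = (\<Sum>q\<in>(UNIV::('a\<times>'a) set). \<bar>rel_payoff \<pi> (fst q) (snd q)\<bar>)"
  have B: "rel_payoff \<pi> x y \<le> B" for x y
  proof -
    have "\<bar>rel_payoff \<pi> (fst (x,y)) (snd (x,y))\<bar> \<le> B"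
      unfolding B_def by (rule member_le_sum) auto
    then show ?thesis by simp
  qed
  have B0: "B \<ge> 0" unfolding B_def by (simp add: sum_nonneg)
  define M where "M = real CARD('a\<times>'a) * B"
  have bound: "(\<Sum>t\<le>T. rel_payoff \<pi> (xs t) (imitate \<pi> y0 xs t)) \<le> M" for y0 xs T
  proof -
    define P where "P = {t. rel_payoff \<pi> (xs t) (imitate \<pi> y0 xs t) > 0}"
    define prof where "prof = (\<lambda>t. (xs t, imitate \<pi> y0 xs t))"
    have noloop: "\<not> (Rimi \<pi>)\<^sup>+\<^sup>+ a a" for a using cycle_from_trancl nc by blast
    have inj: "inj_on prof P"
    proof (rule inj_onI)
      fix t s assume ts: "t \<in> P" "s \<in> P" "prof t = prof s"
      show "t = s"
      proof (rule ccontr)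
        assume "t \<noteq> s"
        then consider "t < s" | "s < t" by linarith
        then show False
        proof cases
          case 1
          then have "(Rimi \<pi>)\<^sup>+\<^sup>+ (prof t) (prof s)"
            using chain_lemma[of t \<pi> xs y0 s] ts unfolding P_def prof_def by auto
          then show False using noloop ts(3) by metis
        next
          case 2
          then have "(Rimi \<pi>)\<^sup>+\<^sup>+ (prof s) (prof t)"
            using chain_lemma[of s \<pi> xs y0 t] ts unfolding P_def prof_def by auto
          then show False using noloop ts(3) by metis
        qed
      qed
    qed
    have card: "card (P \<inter> {..T}) \<le> CARD('a\<times>'a)"
    proof -
      have "card (P \<inter> {..T}) = card (prof ` (P \<inter> {..T}))"
        using inj by (simp add: card_image inj_on_subset)
      also have "\<dots> \<le> CARD('a\<times>'a)" by (rule card_mono) auto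
      finally show ?thesis .
    qed
    have "(\<Sum>t\<le>T. rel_payoff \<pi> (xs t) (imitate \<pi> y0 xs t))
        = (\<Sum>t\<in>P \<inter> {..T}. rel_payoff \<pi> (xs t) (imitate \<pi> y0 xs t))
          + (\<Sum>t\<in>{..T} - P. rel_payoff \<pi> (xs t) (imitate \<pi> y0 xs t))"
      by (metis (no_types, lifting) Int_commute finite_atMost sum.Int_Diff)
    also have "(\<Sum>t\<in>{..T} - P. rel_payoff \<pi> (xs t) (imitate \<pi> y0 xs t)) \<le> 0"
      by (rule sum_nonpos) (auto simp: P_def)
    also have "(\<Sum>t\<in>P \<inter> {..T}. rel_payoff \<pi> (xs t) (imitate \<pi> y0 xs t)) \<le> (\<Sum>t\<in>P \<inter> {..T}. B)"
      by (rule sum_mono) (rule B)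
    also have "\<dots> = real (card (P \<inter> {..T})) * B" by simp
    also have "\<dots> \<le> M" unfolding M_def using card B0
      by (intro mult_right_mono) (simp_all add: of_nat_mult[symmetric] del: of_nat_mult)
    finally show ?thesis by simp
  qed
  show ?thesis unfolding no_money_pump_def
  proof (intro exI[of _ M] conjI allI)
    show "0 \<le> M" unfolding M_def using B0 by simp
    fix y0 xs
    show "limsup (\<lambda>T. ereal (\<Sum>t\<le>T. rel_payoff \<pi> (xs t) (imitate \<pi> y0 xs t))) \<le> ereal M"
      by (rule Limsup_bounded) (simp add: bound)
  qed
qed

theorem lemma2:
  fixes \<pi> :: "'a::finite \<Rightarrow> 'a \<Rightarrow> real"
  shows "money_pump \<pi> \<longleftrightarrow> (\<exists>p. imitation_cycle \<pi> p)"
  using cycle_pump nocycle_nopump unfolding money_pump_def by blast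

end
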